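(* Let $f:\mathbb{F}_{2^n}\to\mathbb{F}_{2^n}$ be APN. Then \[|\mathrm{Im}(f)|\geq\begin{cases}\frac{2^n+1}{3} & n\text{ odd},\\ \frac{2^n+2}{3} & n \text{ even}.\end{cases}\] If $n$ is odd and $|\mathrm{Im}(f)|=\frac{2^n+1}{3}$, then $\omega(y_0)=2$ for one element $y_0\in\mathrm{Im}(f)$ and $\omega(y)=3$ for all $y\in\mathrm{Im}(f)\setminus\{y_0\}$. If $n$ is even and $|\mathrm{Im}(f)|=\frac{2^n+2}{3}$, then one of the following holds: 1. $\omega(y_0)=1$ for one element $y_0\in\mathrm{Im}(f)$ and $\omega(y)=3$ for all other $y\in\mathrm{Im}(f)$ (i.e. $f$ is almost-3-to-1); 2. $\omega(y_0)=\omega(y_1)=2$ for two elements $y_0,y_1\in\mathrm{Im}(f)$ and $\omega(y)=3$ for all other $y\in\mathrm{Im}(f)$; 3. $\omega(y_0)=\omega(y_1)=\omega(y_2)=2$ for three elements $y_0,y_1,y_2\in\mathrm{Im}(f)$, $\omega(y_3)=4$ for a unique further element $y_3\in\mathrm{Im}(f)$, and $\omega(y)=3$ for all other $y\in\mathrm{Im}(f)$.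
   Context: A map $f:\mathbb{F}_{2^n}\to\mathbb{F}_{2^n}$ is APN if for every $a\neq 0$ and every $b$ the equation $f(x+a)+f(x)=b$ has at most 2 solutions. $\omega(y)=|f^{-1}(\{y\})|$. $f$ is almost-3-to-1 if there is a unique element of $\mathrm{Im}(f)$ with exactly one preimage and every other element of $\mathrm{Im}(f)$ has exactly 3 preimages. *)

theory Defs
  imports Complex_Main
begin

definition apn :: "('a::{field,finite} \<Rightarrow> 'a) \<Rightarrow> bool" where
  "apn f \<longleftrightarrow> (\<forall>a b. a \<noteq> 0 \<longrightarrow> card {x. f (x + a) + f x = b} \<le> 2)"

definition omega :: "('a \<Rightarrow> 'b) \<Rightarrow> 'b \<Rightarrow> nat" where
  "omega f y = card (f -` {y})"

end

theory Submission
  imports Defs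
begin

lemma card_fibers:
  assumes "finite A"
  shows "card A = (\<Sum>y\<in>g ` A. card {a\<in>A. g a = y})"
proof -
  have "A = (\<Union>y\<in>g ` A. {a\<in>A. g a = y})" by auto
  hence "card A = card (\<Union>y\<in>g ` A. {a\<in>A. g a = y})" by simp
  also have "\<dots> = (\<Sum>y\<in>g ` A. card {a\<in>A. g a = y})"
    by (rule card_UN_disjoint) (use assms in auto)
  finally show ?thesis .
qed

lemma even_card_neg:
  fixes A :: "'a::ab_group_add set"
  assumes "finite A" "\<forall>x\<in>A. -x \<in> A \<and> -x \<noteq> x"
  shows "even (card A)"
  using assms
proof (induction "card A" arbitrary: A rule: less_induct)
  case less
  show ?case
  proof (cases "A = {}")
    case True then show ?thesis by simp
  next
    case False
    then obtain x where x: "x \<in> A" by blast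
    let ?B = "A - {x, -x}"
    have nx: "-x \<in> A" "-x \<noteq> x" using less.prems(2) x by auto
    have cB: "card A = card ?B + 2"
    proof -
      have "card ?B = card A - card {x, -x}"
        using x nx less.prems(1) by (intro card_Diff_subset) auto
      moreover have "card {x, -x} = 2" using nx by simp
      moreover have "card {x,-x} \<le> card A" using x nx less.prems(1) by (intro card_mono) auto
      ultimately show ?thesis by simp
    qed
    have cl: "\<forall>y\<in>?B. -y \<in> ?B \<and> -y \<noteq> y"
    proof
      fix y assume y: "y \<in> ?B"
      hence "-y \<in> A" "-y \<noteq> y" using less.prems(2) by auto
      moreover have "-y \<noteq> x" using y by auto
      moreover have "-y \<noteq> -x" using y by auto
      ultimately show "-y \<in> ?B \<and> -y \<noteq> y" by auto
    qed
    have "even (card ?B)" using less.hyps[of ?B] cB cl less.prems(1) by simp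
    thus ?thesis using cB by simp
  qed
qed

lemma char2:
  assumes "card (UNIV::'a::{field,finite} set) = 2^n" shows "(1::'a) + 1 = 0"
proof (rule ccontr)
  assume h: "(1::'a)+1 \<noteq> 0"
  have "\<forall>x\<in>(UNIV - {0::'a}). -x \<in> UNIV - {0} \<and> -x \<noteq> x"
  proof
    fix x :: 'a assume "x \<in> UNIV - {0}"
    hence x0: "x \<noteq> 0" by simp
    have "-x \<noteq> x"
    proof
      assume "-x = x"
      hence "x + x = 0" by (metis ab_left_minus)
      hence "(1+1)*x = 0" by (simp add: distrib_right)
      then show False using h x0 by simp
    qed
    thus "-x \<in> UNIV - {0} \<and> -x \<noteq> x" using x0 by simp
  qed
  hence ev: "even (card (UNIV - {0::'a}))" by (intro even_card_neg) auto
  have c: "card (UNIV - {0::'a}) = 2^n - 1" using assms by (simp add: card_Diff_singleton)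
  have "n \<noteq> 0"
  proof
    assume "n = 0"
    have "card {0::'a, 1} \<le> card (UNIV::'a set)" by (intro card_mono) auto
    then show False using assms \<open>n = 0\<close> by simp
  qed
  then obtain k where k: "n = Suc k" by (cases n) auto
  have "(1::nat) \<le> 2^k" by simp
  then have "(2::nat)^n - 1 = 2*(2^k - 1) + 1" unfolding k power_Suc by arith
  then have "odd ((2::nat)^n - 1)" by simp
  then show False using ev c by simp
qed

lemma neg_self: "(1::'a::ring_1) + 1 = 0 \<Longrightarrow> -v = (v::'a)"
proof -
  assume "(1::'a) + 1 = 0"
  hence "v + v = 0" by (metis distrib_right mult_1 mult_zero_left)
  thus "-v = v" by (metis add_eq_0_iff2 minus_minus)
qed

lemma eq_iff_sum0: "(1::'a::ring_1) + 1 = 0 \<Longrightarrow> (u = v) = (u + v = (0::'a))"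
  by (metis add_eq_0_iff2 neg_self)

lemma sum_omega:
  fixes f :: "'a::finite \<Rightarrow> 'b"
  shows "(\<Sum>y\<in>range f. omega f y) = card (UNIV::'a set)"
proof -
  have "card (UNIV::'a set) = (\<Sum>y\<in>f ` UNIV. card {a\<in>UNIV. f a = y})"
    using card_fibers[of "UNIV::'a set" f] by simp
  thus ?thesis unfolding omega_def by (simp add: vimage_def)
qed

lemma sum_omega_sq: "(\<Sum>y\<in>range f. (omega f y)^2) = card {(x,z). f x = f (z::'a::finite)}"
proof -
  let ?P = "{(x,z). f x = f (z::'a)}"
  let ?g = "\<lambda>p. f (fst p)"
  have "card ?P = (\<Sum>y\<in>?g ` ?P. card {p\<in>?P. ?g p = y})"
    using card_fibers[of ?P ?g] by simp
  moreover have "?g ` ?P = range f"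
  proof
    show "?g ` ?P \<subseteq> range f" by auto
    show "range f \<subseteq> ?g ` ?P"
    proof
      fix y assume "y \<in> range f" then obtain x where "y = f x" by auto
      then show "y \<in> ?g ` ?P" by (intro rev_image_eqI[of "(x,x)"]) auto
    qed
  qed
  moreover have "\<And>y. {p\<in>?P. ?g p = y} = f -` {y} \<times> f -` {y}" by auto
  ultimately show ?thesis unfolding omega_def by (simp add: card_cartesian_product power2_eq_square)
qed

lemma diag: "card {(x,z). f x = f (z::'a::finite)} = card (UNIV::'a set) + card {(x,z). f x = f z \<and> x \<noteq> z}"
proof -
  have "{(x,z). f x = f (z::'a::finite)} = range (\<lambda>x. (x,x)) \<union> {(x,z). f x = f z \<and> x \<noteq> z}" by auto
  moreover have "card (range (\<lambda>x::'a. (x,x))) = card (UNIV::'a set)"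
    by (rule card_image) (auto simp: inj_on_def)
  moreover have "card (range (\<lambda>x::'a. (x,x)) \<union> {(x,z). f x = f z \<and> x \<noteq> z})
     = card (range (\<lambda>x::'a. (x,x))) + card {(x,z). f x = f z \<and> x \<noteq> z}"
    by (rule card_Un_disjoint) auto
  ultimately show ?thesis by simp
qed

lemma off_bound:
  fixes f :: "'a::{field,finite} \<Rightarrow> 'a"
  assumes c2: "(1::'a)+1=0" and apn: "apn f"
  shows "card {(x,z). f x = f z \<and> x \<noteq> z} \<le> 2 * (card (UNIV::'a set) - 1)"
proof -
  let ?Q = "Sigma (UNIV - {0}) (\<lambda>a. {x. f (x+a) = f x})"
  have "{(x,z). f x = f z \<and> x \<noteq> z} \<subseteq> (\<lambda>(a,x). (x, x+a)) ` ?Q"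
  proof
    fix p assume "p \<in> {(x,z). f x = f z \<and> x \<noteq> z}"
    then obtain x z where p: "p = (x,z)" "f x = f z" "x \<noteq> z" by auto
    show "p \<in> (\<lambda>(a,x). (x, x+a)) ` ?Q"
      by (rule rev_image_eqI[of "(z - x, x)"]) (use p in auto)
  qed
  hence "card {(x,z). f x = f z \<and> x \<noteq> z} \<le> card ((\<lambda>(a,x). (x, x+a)) ` ?Q)"
    by (intro card_mono) auto
  also have "\<dots> \<le> card ?Q" by (rule card_image_le) simp
  also have "\<dots> = (\<Sum>a\<in>UNIV-{0}. card {x. f (x+a) = f x})" by simp
  also have "\<dots> \<le> of_nat (card (UNIV - {0::'a})) * 2"
  proof (rule sum_bounded_above)
    fix a :: 'a assume "a \<in> UNIV - {0}"
    hence "a \<noteq> 0" by simp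
    moreover have "{x. f (x+a) = f x} = {x. f (x+a) + f x = 0}"
      using eq_iff_sum0[OF c2] by blast
    ultimately show "card {x. f (x+a) = f x} \<le> 2" using apn unfolding apn_def by simp
  qed
  also have "\<dots> = 2 * (card (UNIV::'a set) - 1)" by (simp add: card_Diff_singleton)
  finally show ?thesis .
qed

lemma int_D_nonneg: "((k::int) - 2) * (k - 3) \<ge> 0"
  by (cases "k \<le> 2") (auto intro: mult_nonpos_nonpos)

lemma int_D_ge2: "(k::int) \<ge> 1 \<Longrightarrow> (k - 2) * (k - 3) \<noteq> 0 \<Longrightarrow> (k - 2) * (k - 3) \<ge> 2 \<and> ((k - 2) * (k - 3) \<le> 2 \<longrightarrow> k = 1 \<or> k = 4)"
proof (cases "k \<le> 4")
  case True
  assume "k \<ge> 1" "(k - 2) * (k - 3) \<noteq> 0"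
  then have "k = 1 \<or> k = 2 \<or> k = 3 \<or> k = 4" using True by auto
  then show ?thesis using \<open>(k - 2) * (k - 3) \<noteq> 0\<close> by auto
next
  case False
  have "(3::int) * 2 \<le> (k - 2) * (k - 3)" using False by (intro mult_mono) auto
  then show ?thesis by auto
qed

lemma pow2_mod3: "(2::nat)^n mod 3 = (if even n then 1 else 2)"
proof (induction n)
  case 0 then show ?case by simp
next
  case (Suc n)
  have "(2::nat)^Suc n mod 3 = (2 * (2^n mod 3)) mod 3" by (simp add: mod_mult_right_eq)
  then show ?case using Suc by (cases "even n") simp_all
qed


lemma ex4I: "P a b c e \<Longrightarrow> a\<in>A \<Longrightarrow> b\<in>A \<Longrightarrow> c\<in>A \<Longrightarrow> e\<in>A \<Longrightarrow>
  \<exists>y0\<in>A. \<exists>y1\<in>A. \<exists>y2\<in>A. \<exists>y3\<in>A. P y0 y1 y2 y3"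
  by blast

lemma sum23:
  assumes "finite S" "\<forall>y\<in>S. g y = 2 \<or> g y = (3::nat)"
  shows "sum g S + card {y\<in>S. g y = 2} = 3 * card S"
  using assms
proof (induction S rule: finite_induct)
  case empty then show ?case by simp
next
  case (insert x F)
  have "{y\<in>insert x F. g y = 2} = (if g x = 2 then insert x {y\<in>F. g y = 2} else {y\<in>F. g y = 2})" by auto
  show ?case
  proof (cases "g x = 2")
    case True
    have "{y\<in>insert x F. g y = 2} = insert x {y\<in>F. g y = 2}" using True by auto
    moreover have "card (insert x {y\<in>F. g y = 2}) = Suc (card {y\<in>F. g y = 2})"
      using insert by simp
    ultimately show ?thesis using insert True by simp
  next
    case False
    then have "g x = 3" using insert by simp
    have "{y\<in>insert x F. g y = 2} = {y\<in>F. g y = 2}" using False by auto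
    then show ?thesis using insert \<open>g x = 3\<close> by simp
  qed
qed


theorem theorem4p2:
  fixes f :: "'a::{field,finite} \<Rightarrow> 'a" and n :: nat
  assumes card: "card (UNIV :: 'a set) = 2 ^ n"
    and apn: "apn f"
  shows "(odd n \<longrightarrow> real (card (range f)) \<ge> (2 ^ n + 1) / 3)
       \<and> (even n \<longrightarrow> real (card (range f)) \<ge> (2 ^ n + 2) / 3)
       \<and> (odd n \<and> real (card (range f)) = (2 ^ n + 1) / 3 \<longrightarrow>
            (\<exists>y0\<in>range f. omega f y0 = 2 \<and> (\<forall>y\<in>range f - {y0}. omega f y = 3)))
       \<and> (even n \<and> real (card (range f)) = (2 ^ n + 2) / 3 \<longrightarrow>
            ((\<exists>y0\<in>range f. omega f y0 = 1 \<and> (\<forall>y\<in>range f - {y0}. omega f y = 3))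
           \<or> (\<exists>y0\<in>range f. \<exists>y1\<in>range f. y0 \<noteq> y1 \<and>
                omega f y0 = 2 \<and> omega f y1 = 2 \<and>
                (\<forall>y\<in>range f - {y0, y1}. omega f y = 3))
           \<or> (\<exists>y0\<in>range f. \<exists>y1\<in>range f. \<exists>y2\<in>range f. \<exists>y3\<in>range f.
                distinct [y0, y1, y2, y3] \<and>
                omega f y0 = 2 \<and> omega f y1 = 2 \<and> omega f y2 = 2 \<and> omega f y3 = 4 \<and>
                (\<forall>y\<in>range f - {y0, y1, y2, y3}. omega f y = 3))))"
proof -
  define q where "q = card (UNIV :: 'a set)"
  define R where "R = range f"
  define m where "m = card R"
  define w where "w = omega f"
  have q: "q = 2^n" using card q_def by simp
  have c2: "(1::'a) + 1 = 0" using char2[OF card] .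
  have finR: "finite R" unfolding R_def by simp
  have S1: "(\<Sum>y\<in>R. w y) = q" unfolding R_def w_def q_def by (rule sum_omega)
  have S2: "(\<Sum>y\<in>R. (w y)^2) + 2 \<le> 3 * q"
  proof -
    have "(\<Sum>y\<in>R. (w y)^2) = q + card {(x,z). f x = f z \<and> x \<noteq> z}"
      unfolding R_def w_def q_def sum_omega_sq diag ..
    moreover have "card {(x,z). f x = f z \<and> x \<noteq> z} \<le> 2 * (q - 1)"
      unfolding q_def by (rule off_bound[OF c2 apn])
    moreover have "q \<ge> 1" unfolding q by simp
    ultimately show ?thesis by linarith
  qed
  have wpos: "\<forall>y\<in>R. w y \<ge> 1"
  proof
    fix y assume "y \<in> R"
    then obtain x where "y = f x" unfolding R_def by auto
    then have "x \<in> f -` {y}" by simp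
    then show "w y \<ge> 1" unfolding w_def omega_def
      by (metis One_nat_def Suc_leI card_gt_0_iff empty_iff finite)
  qed
  define D where "D y = (int (w y) - 2) * (int (w y) - 3)" for y
  have Dsum: "(\<Sum>y\<in>R. D y) \<le> 6 * int m - 2 * int q - 2"
  proof -
    have "\<And>y. D y = int ((w y)^2) - 5 * int (w y) + 6"
      unfolding D_def by (simp add: algebra_simps power2_eq_square)
    hence "(\<Sum>y\<in>R. D y) = (\<Sum>y\<in>R. int ((w y)^2)) - 5 * (\<Sum>y\<in>R. int (w y)) + 6 * int m"
      unfolding m_def by (simp add: sum.distrib sum_subtractf sum_distrib_left)
    also have "\<dots> = int (\<Sum>y\<in>R. (w y)^2) - 5 * int q + 6 * int m"
    proof -
      have a: "(\<Sum>y\<in>R. int (w y)) = int q" using S1 by (metis of_nat_sum)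
      have b: "(\<Sum>y\<in>R. int ((w y)^2)) = int (\<Sum>y\<in>R. (w y)^2)" by (metis of_nat_sum)
      show ?thesis by (simp only: a b)
    qed
    finally have eq: "(\<Sum>y\<in>R. D y) = int (\<Sum>y\<in>R. (w y)^2) - 5 * int q + 6 * int m" .
    have "int (\<Sum>y\<in>R. (w y)^2) + 2 \<le> 3 * int q" using S2 by linarith
    then show ?thesis using eq by linarith
  qed
  have Dnn: "\<And>y. D y \<ge> 0" unfolding D_def by (rule int_D_nonneg)
  have D0: "\<And>y. D y = 0 \<longleftrightarrow> w y = 2 \<or> w y = 3" unfolding D_def by auto
  have "0 \<le> (\<Sum>y\<in>R. D y)" using Dnn by (simp add: sum_nonneg)
  hence low: "3 * m \<ge> q + 1" using Dsum by linarith
  have md: "q mod 3 = (if even n then 1 else 2)" unfolding q by (rule pow2_mod3)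
  have realm: "real m = real (card (range f))" unfolding m_def R_def ..
  have sub23: "\<And>S. S \<subseteq> R \<Longrightarrow> (\<forall>y\<in>S. D y = 0) \<Longrightarrow>
      sum w S + card {y\<in>S. w y = 2} = 3 * card S"
  proof -
    fix S assume "S \<subseteq> R" "\<forall>y\<in>S. D y = 0"
    show "sum w S + card {y\<in>S. w y = 2} = 3 * card S"
    proof (rule sum23)
      show "finite S" using finite_subset[OF \<open>S \<subseteq> R\<close> finR] .
      show "\<forall>y\<in>S. w y = 2 \<or> w y = 3" using \<open>\<forall>y\<in>S. D y = 0\<close> D0 by blast
    qed
  qed
  have P1: "odd n \<longrightarrow> real (card (range f)) \<ge> (2 ^ n + 1) / 3"
  proof
    have "real (q + 1) \<le> real (3*m)" using low by (simp only: of_nat_le_iff)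
    then show "real (card (range f)) \<ge> (2 ^ n + 1) / 3" using realm q by simp
  qed
  have P2: "even n \<longrightarrow> real (card (range f)) \<ge> (2 ^ n + 2) / 3"
  proof
    assume "even n"
    then have "q mod 3 = 1" using md by simp
    then have "3 * m \<ge> q + 2" using low by presburger
    then have "real (q + 2) \<le> real (3*m)" by (simp only: of_nat_le_iff)
    then show "real (card (range f)) \<ge> (2 ^ n + 2) / 3" using realm q by simp
  qed
  have P3: "odd n \<and> real (card (range f)) = (2 ^ n + 1) / 3 \<longrightarrow>
            (\<exists>y0\<in>range f. omega f y0 = 2 \<and> (\<forall>y\<in>range f - {y0}. omega f y = 3))"
  proof
    assume "odd n \<and> real (card (range f)) = (2 ^ n + 1) / 3"
    then have "3 * real m = real q + 1" using realm q by simp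
    then have e: "3 * m = q + 1" by linarith
    then have "(\<Sum>y\<in>R. D y) \<le> 0" using Dsum by linarith
    then have "(\<Sum>y\<in>R. D y) = 0" using Dnn by (meson antisym sum_nonneg)
    then have allz: "\<forall>y\<in>R. D y = 0" using finR Dnn by (simp add: sum_nonneg_eq_0_iff)
    have "sum w R + card {y\<in>R. w y = 2} = 3 * card R" using sub23[OF order_refl allz] .
    then have "card {y\<in>R. w y = 2} = 1" using S1 e m_def by simp
    then obtain y0 where y0: "{y\<in>R. w y = 2} = {y0}" by (rule card_1_singletonE)
    show "\<exists>y0\<in>range f. omega f y0 = 2 \<and> (\<forall>y\<in>range f - {y0}. omega f y = 3)"
    proof (intro bexI conjI ballI)
      show "y0 \<in> range f" using y0 R_def by auto
      show "omega f y0 = 2" using y0 w_def by auto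
      fix y assume y: "y \<in> range f - {y0}"
      then have "w y \<noteq> 2" using y0 R_def by auto
      then show "omega f y = 3" using y allz D0 R_def w_def by auto
    qed
  qed
  have P4: "even n \<and> real (card (range f)) = (2 ^ n + 2) / 3 \<longrightarrow>
            ((\<exists>y0\<in>range f. omega f y0 = 1 \<and> (\<forall>y\<in>range f - {y0}. omega f y = 3))
           \<or> (\<exists>y0\<in>range f. \<exists>y1\<in>range f. y0 \<noteq> y1 \<and>
                omega f y0 = 2 \<and> omega f y1 = 2 \<and>
                (\<forall>y\<in>range f - {y0, y1}. omega f y = 3))
           \<or> (\<exists>y0\<in>range f. \<exists>y1\<in>range f. \<exists>y2\<in>range f. \<exists>y3\<in>range f.
                distinct [y0, y1, y2, y3] \<and>
                omega f y0 = 2 \<and> omega f y1 = 2 \<and> omega f y2 = 2 \<and> omega f y3 = 4 \<and>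
                (\<forall>y\<in>range f - {y0, y1, y2, y3}. omega f y = 3)))"
  proof
    assume "even n \<and> real (card (range f)) = (2 ^ n + 2) / 3"
    then have "3 * real m = real q + 2" using realm q by simp
    then have e: "3 * m = q + 2" by linarith
    then have Dle: "(\<Sum>y\<in>R. D y) \<le> 2" using Dsum by linarith
    define E where "E = {y\<in>R. D y \<noteq> 0}"
    define S where "S = R - E"
    have ER: "E \<subseteq> R" unfolding E_def by auto
    have finE: "finite E" using finR ER finite_subset by blast
    have sumE: "(\<Sum>y\<in>R. D y) = (\<Sum>y\<in>E. D y)"
      unfolding E_def using finR by (intro sum.mono_neutral_right) auto
    have Dge: "\<forall>y\<in>E. D y \<ge> 2 \<and> (D y \<le> 2 \<longrightarrow> w y = 1 \<or> w y = 4)"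
    proof
      fix y assume y: "y \<in> E"
      then have "int (w y) \<ge> 1" "D y \<noteq> 0" using wpos E_def by auto
      from int_D_ge2[OF this[unfolded D_def]]
      show "D y \<ge> 2 \<and> (D y \<le> 2 \<longrightarrow> w y = 1 \<or> w y = 4)" unfolding D_def by auto
    qed
    have "of_nat (card E) * 2 \<le> (\<Sum>y\<in>E. D y)"
      using Dge by (intro sum_bounded_below) auto
    then have cE: "card E \<le> 1" using Dle sumE by linarith
    have Sz: "\<forall>y\<in>S. D y = 0" unfolding S_def E_def by auto
    have SR: "S \<subseteq> R" unfolding S_def by auto
    have s23: "sum w S + card {y\<in>S. w y = 2} = 3 * card S" using sub23[OF SR Sz] .
    have splitR: "sum w R = sum w S + sum w E"
      unfolding S_def using ER finR by (rule sum.subset_diff)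
    have cS: "card S = m - card E" unfolding S_def m_def using finR ER by (simp add: card_Diff_subset finite_subset)
    have cEm: "card E \<le> m" unfolding m_def using finR ER by (simp add: card_mono)
    have memS: "\<And>y. y \<in> range f \<Longrightarrow> y \<notin> E \<Longrightarrow> y \<in> S" unfolding S_def R_def by auto
    have S3: "\<And>y. y \<in> S \<Longrightarrow> y \<notin> {y\<in>S. w y = 2} \<Longrightarrow> w y = 3" using Sz D0 by auto
    show "((\<exists>y0\<in>range f. omega f y0 = 1 \<and> (\<forall>y\<in>range f - {y0}. omega f y = 3))
           \<or> (\<exists>y0\<in>range f. \<exists>y1\<in>range f. y0 \<noteq> y1 \<and>
                omega f y0 = 2 \<and> omega f y1 = 2 \<and>
                (\<forall>y\<in>range f - {y0, y1}. omega f y = 3))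
           \<or> (\<exists>y0\<in>range f. \<exists>y1\<in>range f. \<exists>y2\<in>range f. \<exists>y3\<in>range f.
                distinct [y0, y1, y2, y3] \<and>
                omega f y0 = 2 \<and> omega f y1 = 2 \<and> omega f y2 = 2 \<and> omega f y3 = 4 \<and>
                (\<forall>y\<in>range f - {y0, y1, y2, y3}. omega f y = 3)))"
    proof (cases "card E = 0")
      case True
      then have E0: "E = {}" using finE by simp
      then have "card {y\<in>S. w y = 2} = 2" using s23 splitR S1 cS e True by simp
      then obtain a b where ab: "{y\<in>S. w y = 2} = {a,b}" "a \<noteq> b" by (auto simp: card_2_iff)
      have "\<exists>y0\<in>range f. \<exists>y1\<in>range f. y0 \<noteq> y1 \<and>
                omega f y0 = 2 \<and> omega f y1 = 2 \<and>
                (\<forall>y\<in>range f - {y0, y1}. omega f y = 3)"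
      proof -
        have 1: "a \<in> range f" "b \<in> range f" using ab SR R_def by auto
        have 2: "omega f a = 2" "omega f b = 2" using ab w_def by auto
        have 3: "\<forall>y\<in>range f - {a, b}. omega f y = 3"
        proof
          fix y assume y: "y \<in> range f - {a, b}"
          then have "y \<in> S" using memS E0 by auto
          then show "omega f y = 3" using S3 ab y w_def by auto
        qed
        show ?thesis using 1 2 3 ab(2) by blast
      qed
      then show ?thesis by (rule disjI2[OF disjI1])
    next
      case False
      then have "card E = 1" using cE by linarith
      then obtain e where eE: "E = {e}" by (rule card_1_singletonE)
      have "D e \<le> 2" using Dle sumE eE by simp
      then have we: "w e = 1 \<or> w e = 4" using Dge eE by auto
      have "e \<in> R" using eE ER by auto
      then have eR: "e \<in> range f" unfolding R_def .
      have eS: "e \<notin> S" unfolding S_def using eE by simp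
      have m1: "m \<ge> 1" using cEm \<open>card E = 1\<close> by simp
      have sE: "sum w E = w e" using eE by simp
      have cS1: "card S = m - 1" using cS \<open>card E = 1\<close> by simp
      have qS: "q = sum w S + w e" using splitR S1 sE by simp
      have sS: "sum w S + card {y\<in>S. w y = 2} = 3 * (m - 1)" using s23 cS1 by simp
      have base: "q + card {y\<in>S. w y = 2} = w e + 3 * (m - 1)"
      proof -
        have gen: "\<And>a b c d q'::nat. q' = a + b \<Longrightarrow> a + c = d \<Longrightarrow> q' + c = b + d" by simp
        show ?thesis by (rule gen[OF qS sS])
      qed
      have m3: "3 * m = 3 * (m - 1) + 3" using m1 by simp
      show ?thesis
      proof (cases "w e = 1")
        case True
        then have "card {y\<in>S. w y = 2} = 0" using base e m3 by linarith
        then have A0: "{y\<in>S. w y = 2} = {}" using finR SR by (simp add: finite_subset)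
        have "\<exists>y0\<in>range f. omega f y0 = 1 \<and> (\<forall>y\<in>range f - {y0}. omega f y = 3)"
        proof -
          have 2: "omega f e = 1" using True w_def by simp
          have 3: "\<forall>y\<in>range f - {e}. omega f y = 3"
          proof
            fix y assume y: "y \<in> range f - {e}"
            then have "y \<in> S" using memS eE by auto
            then show "omega f y = 3" using S3 A0 w_def by auto
          qed
          show ?thesis using eR 2 3 by blast
        qed
        then show ?thesis by (rule disjI1)
      next
        case False
        then have w4: "w e = 4" using we by simp
        then have "card {y\<in>S. w y = 2} = 3" using base e m3 by linarith
        then obtain a b c where abc: "{y\<in>S. w y = 2} = {a,b,c}" "a \<noteq> b" "b \<noteq> c" "a \<noteq> c"
          unfolding card_3_iff by blast
        have "\<exists>y0\<in>range f. \<exists>y1\<in>range f. \<exists>y2\<in>range f. \<exists>y3\<in>range f.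
                distinct [y0, y1, y2, y3] \<and>
                omega f y0 = 2 \<and> omega f y1 = 2 \<and> omega f y2 = 2 \<and> omega f y3 = 4 \<and>
                (\<forall>y\<in>range f - {y0, y1, y2, y3}. omega f y = 3)"
        proof -
          have inA: "a \<in> {y\<in>S. w y = 2}" "b \<in> {y\<in>S. w y = 2}" "c \<in> {y\<in>S. w y = 2}"
            using abc(1) by simp_all
          then have inS: "a \<in> S" "b \<in> S" "c \<in> S" by simp_all
          then have 1: "a \<in> range f" "b \<in> range f" "c \<in> range f" using SR unfolding R_def by blast+
          have "a \<noteq> e" "b \<noteq> e" "c \<noteq> e" using inS eS by blast+
          then have d: "distinct [a, b, c, e]" using abc(2-4) by simp
          have 2: "omega f a = 2" "omega f b = 2" "omega f c = 2" using inA by (simp_all add: w_def)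
          have 4: "omega f e = 4" using w4 w_def by simp
          have 3: "\<forall>y\<in>range f - {a, b, c, e}. omega f y = 3"
          proof
            fix y assume y: "y \<in> range f - {a, b, c, e}"
            then have yS: "y \<in> S" using memS eE by auto
            have "y \<notin> {y\<in>S. w y = 2}" using y by (simp add: abc(1))
            from S3[OF yS this] show "omega f y = 3" by (simp add: w_def)
          qed
          have conj: "distinct [a, b, c, e] \<and>
                omega f a = 2 \<and> omega f b = 2 \<and> omega f c = 2 \<and> omega f e = 4 \<and>
                (\<forall>y\<in>range f - {a, b, c, e}. omega f y = 3)" by (intro conjI d 2 4 3)
          show ?thesis
            by (rule ex4I[where P="\<lambda>y0 y1 y2 y3. distinct [y0, y1, y2, y3] \<and>
                omega f y0 = 2 \<and> omega f y1 = 2 \<and> omega f y2 = 2 \<and> omega f y3 = 4 \<and>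
                (\<forall>y\<in>range f - {y0, y1, y2, y3}. omega f y = 3)", OF conj 1 eR])
        qed
        note c3 = this
        show ?thesis apply (rule disjI2) apply (rule disjI2) by (rule c3)
      qed
    qed
  qed
  show ?thesis using P1 P2 P3 P4 by blast
qed

end
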